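(* Let $0<p_1\le p_2\le1$ and let $X_1,X_2,Y_1,Y_2$ be independent random variables with $X_1$ geometric with success probability $p_1$, $X_2$ geometric with success probability $p_2$, and $Y_1,Y_2$ geometric with success probability $(p_1+p_2)/2$. Let $Z$ be a random variable taking nonnegative integer values, independent of $X_1,X_2,Y_1,Y_2$. Then for every positive integer $j$, $$\mathbb{P}(Z+X_1+X_2>j)\ge\mathbb{P}(Z+Y_1+Y_2>j).$$
   Context: A random variable $Y$ is geometric with success probability $p$ if $\mathbb{P}(Y=s)=(1-p)^{s-1}p$ for $s=1,2,\dots$. *)

theory Defs
  imports "HOL-Probability.Probability"
begin

definition geometric_rv :: "'a measure \<Rightarrow> real \<Rightarrow> ('a \<Rightarrow> nat) \<Rightarrow> bool" where
  "geometric_rv M p Y \<longleftrightarrow>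
     Y \<in> measurable M (count_space UNIV) \<and>
     (\<forall>s::nat. s \<ge> 1 \<longrightarrow> measure M {\<omega> \<in> space M. Y \<omega> = s} = (1 - p) ^ (s - 1) * p)"

end

theory Submission
  imports Defs
begin


definition T :: "real \<Rightarrow> real \<Rightarrow> nat \<Rightarrow> real" where
  "T q1 q2 k = q1^k + (1-q1) * (\<Sum>i<k. q2^(k - Suc i) * q1^i)"

lemma T_mul: "(q1 - q2) * T q1 q2 k = q1^k*(1-q2) - q2^k*(1-q1)"
proof -
  have "(q1 - q2) * (\<Sum>i<k. q2^(k - Suc i) * q1^i) = q1^k - q2^k"
    using power_diff_sumr2[of q1 k q2] by simp
  then have "(q1 - q2) * T q1 q2 k = (q1 - q2) * q1^k + (1-q1) * (q1^k - q2^k)"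
    unfolding T_def by (simp only: distrib_left mult.left_commute[of "q1-q2" "1-q1"])
  then show ?thesis by (simp add: algebra_simps)
qed

lemma T_sym: "T q1 q2 k = T q2 q1 k"
proof (cases "q1 = q2")
  case False
  have "(q1 - q2) * T q1 q2 k = (q1 - q2) * T q2 q1 k"
    using T_mul[of q1 q2 k] T_mul[of q2 q1 k] by (simp add: algebra_simps)
  with False show ?thesis by simp
qed simp

lemma T_0: "T q1 q2 0 = 1" by (simp add: T_def)

lemma T_Suc: "T q1 q2 (Suc k) = q1 * T q1 q2 k + (1-q1) * q2^k"
proof -
  have "(\<Sum>i<Suc k. q2^(Suc k - Suc i) * q1^i) = q2^k + q1 * (\<Sum>i<k. q2^(k - Suc i) * q1^i)"
    by (simp add: sum.lessThan_Suc_shift sum_distrib_left algebra_simps del: sum.lessThan_Suc)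
  then show ?thesis unfolding T_def by (simp add: algebra_simps)
qed

lemma convex_pow: fixes x y :: real assumes "0 \<le> x" "0 \<le> y"
  shows "2 * ((x+y)/2)^n \<le> x^n + y^n"
proof (induction n)
  case (Suc n)
  have "0 \<le> (x^n - y^n) * (x - y)"
  proof (cases "x \<le> y")
    case True then have "x^n \<le> y^n" using assms power_mono by blast
    with True show ?thesis by (simp add: mult_nonpos_nonpos)
  next
    case False then have "y^n \<le> x^n" using assms power_mono by (meson linorder_le_cases)
    with False show ?thesis by simp
  qed
  then have h1: "(x^n + y^n) * ((x + y)/2) \<le> x^Suc n + y^Suc n" by (simp add: algebra_simps)
  have h2: "2 * ((x+y)/2)^Suc n = (2*((x+y)/2)^n) * ((x+y)/2)" by simp
  have h3: "(2*((x+y)/2)^n) * ((x+y)/2) \<le> (x^n + y^n) * ((x+y)/2)"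
    using Suc assms by (intro mult_right_mono) auto
  show ?case using h1 h2 h3 by linarith
qed simp

lemma T_main:
  fixes q1 q2 :: real
  assumes "0 \<le> q2" "q2 \<le> q1" "q1 \<le> 1"
  shows "T ((q1+q2)/2) ((q1+q2)/2) k \<le> T q1 q2 k"
proof (induction k)
  case 0 then show ?case by (simp add: T_0)
next
  case (Suc k)
  define m where "m = (q1+q2)/2"
  have m: "q2 \<le> m" "m \<le> q1" "0 \<le> m" using assms by (auto simp: m_def)
  have avg: "T q1 q2 (Suc k) = m * T q1 q2 k + ((1-q1) * q2^k + (1-q2) * q1^k)/2"
    using T_Suc[of q1 q2 k] T_Suc[of q2 q1 k] T_sym[of q1 q2] by (simp add: m_def field_simps)
  have mk: "T m m (Suc k) = m * T m m k + (1-m)*m^k" by (rule T_Suc)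
  have a: "m^k \<le> q1^k" using m power_mono by blast
  have F1: "(1-q1) * (q2^k - m^k + (q1^k - m^k)) \<ge> 0"
    using convex_pow[of q1 q2 k] assms by (intro mult_nonneg_nonneg) (auto simp: m_def)
  have F2: "(1-q1) * (q1^k - m^k) \<le> (1-q2) * (q1^k - m^k)"
    using a assms by (intro mult_right_mono) auto
  have E: "(1-q1)*q2^k + (1-q2)*q1^k - 2*(1-m)*m^k = (1-q1) * (q2^k - m^k + (q1^k - m^k)) - (1-q1) * (q1^k - m^k) + (1-q2) * (q1^k - m^k) + (2-q1-q2-2*(1-m))*m^k"
    by (simp add: algebra_simps)
  have Z: "(2-q1-q2-2*(1-m))*m^k = 0" by (simp add: m_def field_simps)
  have br: "(1-m)*m^k \<le> ((1-q1) * q2^k + (1-q2) * q1^k)/2"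
  proof -
    have "0 \<le> (1-q1)*q2^k + (1-q2)*q1^k - 2*(1-m)*m^k" unfolding E Z using F1 F2 by linarith
    then show ?thesis by (simp add: algebra_simps)
  qed
  have "m * T m m k \<le> m * T q1 q2 k" using Suc m by (simp add: m_def mult_left_mono)
  then have "T m m (Suc k) \<le> T q1 q2 (Suc k)" using avg mk br by linarith
  then show ?case by (simp add: m_def)
qed

lemma geo_sum: "(\<Sum>a\<le>n. q^a * (1-q)) = 1 - (q::real)^Suc n"
  by (induction n) (auto simp: algebra_simps)

lemma inner_sum:
  fixes f :: "nat \<Rightarrow> real"
  assumes f0: "f 0 = 0" and fS: "\<And>a. f (Suc a) = q1^a * (1-q1)"
  shows "(\<Sum>a\<le>n. f a * (1 - q2^(n-a))) = 1 - T q1 q2 n"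
proof (cases n)
  case 0 then show ?thesis by (simp add: T_0 f0)
next
  case (Suc n')
  have "(\<Sum>a\<le>n. f a * (1 - q2^(n-a))) = (\<Sum>a\<le>n'. q1^a * (1-q1) * (1 - q2^(n'-a)))"
    unfolding Suc by (simp add: sum.atMost_Suc_shift f0 fS del: sum.atMost_Suc)
  also have "\<dots> = (\<Sum>a\<le>n'. q1^a * (1-q1)) - (1-q1) * (\<Sum>a\<le>n'. q2^(n'-a) * q1^a)"
  proof -
    have "(\<Sum>a\<le>n'. q1^a * (1-q1) * (1 - q2^(n'-a))) = (\<Sum>a\<le>n'. q1^a * (1-q1) - (1-q1) * (q2^(n'-a) * q1^a))"
      by (rule sum.cong) (auto simp: algebra_simps)
    then show ?thesis by (simp only: sum_subtractf sum_distrib_left)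
  qed
  also have "\<dots> = 1 - T q1 q2 n"
    unfolding geo_sum T_def Suc by (simp add: lessThan_Suc_atMost)
  finally show ?thesis .
qed

context prob_space begin

lemma ev_nat: "X \<in> measurable M (count_space UNIV) \<Longrightarrow> {\<omega>\<in>space M. P (X \<omega>)} \<in> events"
proof -
  assume X: "X \<in> measurable M (count_space UNIV)"
  have "X -` {x. P x} \<inter> space M \<in> events" by (rule measurable_sets[OF X]) simp
  moreover have "X -` {x. P x} \<inter> space M = {\<omega>\<in>space M. P (X \<omega>)}" by auto
  ultimately show ?thesis by simp
qed

lemma prob_le_sum:
  assumes X: "X \<in> measurable M (count_space UNIV)"
  shows "prob {\<omega>\<in>space M. (X \<omega>::nat) \<le> n} = (\<Sum>s\<le>n. prob {\<omega>\<in>space M. X \<omega> = s})"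
proof -
  have "{\<omega>\<in>space M. X \<omega> \<le> n} = (\<Union>s\<in>{..n}. {\<omega>\<in>space M. X \<omega> = s})" by auto
  moreover have "prob (\<Union>s\<in>{..n}. {\<omega>\<in>space M. X \<omega> = s}) = (\<Sum>s\<le>n. prob {\<omega>\<in>space M. X \<omega> = s})"
    by (rule finite_measure_finite_Union) (auto simp: disjoint_family_on_def intro: ev_nat[OF X])
  ultimately show ?thesis by simp
qed

lemma geom_cdf0:
  assumes "geometric_rv M p X"
  shows "(\<Sum>s\<le>n. prob {\<omega>\<in>space M. X \<omega> = s}) = prob {\<omega>\<in>space M. X \<omega> = 0} + 1 - (1-p)^n"
proof (induction n)
  case (Suc n)
  have "prob {\<omega>\<in>space M. X \<omega> = Suc n} = (1-p)^n * p"
    using assms unfolding geometric_rv_def by auto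
  with Suc show ?case by (simp add: algebra_simps)
qed simp

lemma geom_zero:
  assumes g: "geometric_rv M p X" and p: "0 < p" "p \<le> 1"
  shows "prob {\<omega>\<in>space M. X \<omega> = 0} = 0"
proof (rule ccontr)
  let ?P0 = "prob {\<omega>\<in>space M. X \<omega> = 0}"
  assume "?P0 \<noteq> 0"
  then have pos: "?P0 > 0" using measure_nonneg[of M] by (simp add: order_less_le)
  have X: "X \<in> measurable M (count_space UNIV)" using g unfolding geometric_rv_def by auto
  obtain N where N: "(1-p)^N < ?P0" using real_arch_pow_inv[OF pos, of "1-p"] p by auto
  have "(\<Sum>s\<le>N. prob {\<omega>\<in>space M. X \<omega> = s}) \<le> 1"
    using prob_le_sum[OF X, of N] prob_le_1 by metis
  with geom_cdf0[OF g, of N] N show False by simp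
qed

lemma geom_cdf:
  assumes g: "geometric_rv M p X" and p: "0 < p" "p \<le> 1"
  shows "(\<Sum>s\<le>n. prob {\<omega>\<in>space M. X \<omega> = s}) = 1 - (1-p)^n"
  using geom_cdf0[OF g, of n] geom_zero[OF g p] by simp

lemma indep3:
  assumes ind: "indep_vars (\<lambda>_. count_space UNIV) X I"
    and I: "i \<in> I" "k \<in> I" "l \<in> I" "i \<noteq> k" "i \<noteq> l" "k \<noteq> l"
  shows "prob {\<omega>\<in>space M. (X i \<omega>::nat) = a \<and> X k \<omega> = b \<and> X l \<omega> = c}
       = prob {\<omega>\<in>space M. X i \<omega> = a} * prob {\<omega>\<in>space M. X k \<omega> = b} * prob {\<omega>\<in>space M. X l \<omega> = c}"
proof -
  define v where "v j = (if j = i then a else if j = k then b else c)" for j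
  define A where "A j = X j -` {v j} \<inter> space M" for j
  have isd: "indep_sets (\<lambda>i. {X i -` A \<inter> space M | A. A \<in> sets (count_space UNIV)}) I"
    using ind unfolding indep_vars_def2 by auto
  have "prob (\<Inter>j\<in>{i,k,l}. A j) = (\<Prod>j\<in>{i,k,l}. prob (A j))"
  proof -
    have "A \<in> Pi {i,k,l} (\<lambda>i. {X i -` A \<inter> space M | A. A \<in> sets (count_space UNIV)})"
      by (auto simp: A_def)
    moreover have "{i,k,l} \<subseteq> I" using I by auto
    ultimately show ?thesis using isd unfolding indep_sets_def by blast
  qed
  moreover have "(\<Inter>j\<in>{i,k,l}. A j) = {\<omega>\<in>space M. X i \<omega> = a \<and> X k \<omega> = b \<and> X l \<omega> = c}"
    using I by (auto simp: A_def v_def)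
  moreover have "A i = {\<omega>\<in>space M. X i \<omega> = a}" "A k = {\<omega>\<in>space M. X k \<omega> = b}"
     "A l = {\<omega>\<in>space M. X l \<omega> = c}"
    using I by (auto simp: A_def v_def)
  ultimately show ?thesis using I by (simp add: mult.assoc)
qed

lemma decomp:
  assumes U: "U \<in> measurable M (count_space UNIV)"
    and V: "V \<in> measurable M (count_space UNIV)"
    and W: "W \<in> measurable M (count_space UNIV)"
    and prod: "\<And>z a b. prob {\<omega>\<in>space M. (U \<omega>::nat) = z \<and> (V \<omega>::nat) = a \<and> (W \<omega>::nat) = b}
       = prob {\<omega>\<in>space M. U \<omega> = z} * prob {\<omega>\<in>space M. V \<omega> = a} * prob {\<omega>\<in>space M. W \<omega> = b}"
  shows "prob {\<omega>\<in>space M. U \<omega> + V \<omega> + W \<omega> \<le> j} =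
    (\<Sum>z\<le>j. prob {\<omega>\<in>space M. U \<omega> = z} * (\<Sum>a\<le>j-z. prob {\<omega>\<in>space M. V \<omega> = a} *
        (\<Sum>b\<le>j-z-a. prob {\<omega>\<in>space M. W \<omega> = b})))"
proof -
  define S where "S = (SIGMA z:{..j}. SIGMA a:{..j-z}. {..j-z-a})"
  define B where "B t = {\<omega>\<in>space M. U \<omega> = fst t \<and> V \<omega> = fst (snd t) \<and> W \<omega> = snd (snd t)}" for t
  have fin: "finite S" unfolding S_def by auto
  have "{\<omega>\<in>space M. U \<omega> + V \<omega> + W \<omega> \<le> j} = (\<Union>t\<in>S. B t)"
  proof (intro equalityI subsetI)
    fix x assume x: "x \<in> {\<omega>\<in>space M. U \<omega> + V \<omega> + W \<omega> \<le> j}"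
    then have "(U x, V x, W x) \<in> S" unfolding S_def by auto
    moreover have "x \<in> B (U x, V x, W x)" using x by (simp add: B_def)
    ultimately show "x \<in> (\<Union>t\<in>S. B t)" by blast
  next
    fix x assume "x \<in> (\<Union>t\<in>S. B t)"
    then obtain z a b where "(z,a,b) \<in> S" "x \<in> B (z,a,b)" by auto
    then show "x \<in> {\<omega>\<in>space M. U \<omega> + V \<omega> + W \<omega> \<le> j}"
      unfolding S_def B_def by auto
  qed
  note ueq = this
  have Bev: "B t \<in> events" for t
  proof -
    have "B t = {\<omega>\<in>space M. U \<omega> = fst t} \<inter> {\<omega>\<in>space M. V \<omega> = fst (snd t)} \<inter> {\<omega>\<in>space M. W \<omega> = snd (snd t)}"
      unfolding B_def by blast
    moreover have "{\<omega>\<in>space M. U \<omega> = fst t} \<inter> {\<omega>\<in>space M. V \<omega> = fst (snd t)} \<inter> {\<omega>\<in>space M. W \<omega> = snd (snd t)} \<in> events"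
      by (intro sets.Int ev_nat U V W)
    ultimately show ?thesis by simp
  qed
  have dis: "disjoint_family_on B S" by (auto simp: B_def disjoint_family_on_def)
  have un: "prob (\<Union>t\<in>S. B t) = (\<Sum>t\<in>S. prob (B t))"
    using fin Bev dis by (intro finite_measure_finite_Union) auto
  have ss: "(\<Sum>t\<in>S. prob (B t)) = (\<Sum>z\<le>j. \<Sum>a\<le>j-z. \<Sum>b\<le>j-z-a.
      prob {\<omega>\<in>space M. U \<omega> = z} * prob {\<omega>\<in>space M. V \<omega> = a} * prob {\<omega>\<in>space M. W \<omega> = b})"
  proof -
    define g where "g z a b = prob {\<omega>\<in>space M. U \<omega> = z} * prob {\<omega>\<in>space M. V \<omega> = a} * prob {\<omega>\<in>space M. W \<omega> = b}" for z a b
    have "prob (B t) = (\<lambda>(z,a,b). g z a b) t" for t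
      by (cases t) (simp add: B_def prod g_def)
    then have "(\<Sum>t\<in>S. prob (B t)) = (\<Sum>t\<in>S. (\<lambda>(z,a,b). g z a b) t)" by simp
    also have "\<dots> = (\<Sum>z\<le>j. \<Sum>p\<in>(SIGMA a:{..j-z}. {..j-z-a}). (\<lambda>(a,b). g z a b) p)"
      unfolding S_def by (subst sum.Sigma) (auto simp: split_def)
    also have "\<dots> = (\<Sum>z\<le>j. \<Sum>a\<le>j-z. \<Sum>b\<le>j-z-a. g z a b)"
      by (rule sum.cong[OF refl]) (subst sum.Sigma, auto)
    finally show ?thesis unfolding g_def .
  qed
  show ?thesis unfolding ueq un ss by (simp only: sum_distrib_left mult.assoc)
qed

lemma cdf3:
  assumes U: "U \<in> measurable M (count_space UNIV)"
    and gV: "geometric_rv M pa V" and gW: "geometric_rv M pb W"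
    and pa: "0 < pa" "pa \<le> 1" and pb: "0 < pb" "pb \<le> 1"
    and prod: "\<And>z a b. prob {\<omega>\<in>space M. (U \<omega>::nat) = z \<and> (V \<omega>::nat) = a \<and> (W \<omega>::nat) = b}
       = prob {\<omega>\<in>space M. U \<omega> = z} * prob {\<omega>\<in>space M. V \<omega> = a} * prob {\<omega>\<in>space M. W \<omega> = b}"
  shows "prob {\<omega>\<in>space M. U \<omega> + V \<omega> + W \<omega> \<le> j} =
    (\<Sum>z\<le>j. prob {\<omega>\<in>space M. U \<omega> = z} * (1 - T (1-pa) (1-pb) (j-z)))"
proof -
  have V: "V \<in> measurable M (count_space UNIV)" and W: "W \<in> measurable M (count_space UNIV)"
    using gV gW unfolding geometric_rv_def by auto
  have inner: "(\<Sum>a\<le>n. prob {\<omega>\<in>space M. V \<omega> = a} *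
        (\<Sum>b\<le>n-a. prob {\<omega>\<in>space M. W \<omega> = b})) = 1 - T (1-pa) (1-pb) n" for n
  proof -
    have "(\<Sum>a\<le>n. prob {\<omega>\<in>space M. V \<omega> = a} *
        (\<Sum>b\<le>n-a. prob {\<omega>\<in>space M. W \<omega> = b})) =
        (\<Sum>a\<le>n. prob {\<omega>\<in>space M. V \<omega> = a} * (1 - (1-pb)^(n-a)))"
      by (simp add: geom_cdf[OF gW pb])
    also have "\<dots> = 1 - T (1-pa) (1-pb) n"
      by (rule inner_sum) (use geom_zero[OF gV pa] gV in \<open>auto simp: geometric_rv_def\<close>)
    finally show ?thesis .
  qed
  show ?thesis unfolding decomp[OF U V W prod] by (rule sum.cong[OF refl]) (simp only: inner)
qed

end
theorem corollaryB4:
  fixes M :: "'a measure" and p1 p2 :: real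
    and Z X1 X2 Y1 Y2 :: "'a \<Rightarrow> nat"
  assumes "prob_space M"
    and "0 < p1" and "p1 \<le> p2" and "p2 \<le> 1"
    and "geometric_rv M p1 X1" and "geometric_rv M p2 X2"
    and "geometric_rv M ((p1 + p2) / 2) Y1" and "geometric_rv M ((p1 + p2) / 2) Y2"
    and "prob_space.indep_vars M (\<lambda>_. count_space UNIV)
           (\<lambda>i. [Z, X1, X2, Y1, Y2] ! i) {0..<5}"
  shows "\<forall>j::nat. j \<ge> 1 \<longrightarrow>
           measure M {\<omega> \<in> space M. Z \<omega> + X1 \<omega> + X2 \<omega> > j}
             \<ge> measure M {\<omega> \<in> space M. Z \<omega> + Y1 \<omega> + Y2 \<omega> > j}"
proof (intro allI impI)
  fix j :: nat
  interpret prob_space M by fact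
  note ind = assms(9)
  have Z: "Z \<in> measurable M (count_space UNIV)"
    using ind unfolding indep_vars_def2 by (auto dest: bspec[of _ _ 0])
  have X1: "X1 \<in> measurable M (count_space UNIV)" "X2 \<in> measurable M (count_space UNIV)"
    "Y1 \<in> measurable M (count_space UNIV)" "Y2 \<in> measurable M (count_space UNIV)"
    using assms(5-8) unfolding geometric_rv_def by auto
  have pm: "0 < (p1+p2)/2" "(p1+p2)/2 \<le> 1" using assms(2-4) by auto
  have cX: "prob {\<omega>\<in>space M. Z \<omega> + X1 \<omega> + X2 \<omega> \<le> j} =
    (\<Sum>z\<le>j. prob {\<omega>\<in>space M. Z \<omega> = z} * (1 - T (1-p1) (1-p2) (j-z)))"
  proof (rule cdf3[OF Z assms(5,6)])
    show "0 < p1" "p1 \<le> 1" "0 < p2" "p2 \<le> 1" using assms(2-4) by auto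
    fix z a b
    show "prob {\<omega>\<in>space M. Z \<omega> = z \<and> X1 \<omega> = a \<and> X2 \<omega> = b}
       = prob {\<omega>\<in>space M. Z \<omega> = z} * prob {\<omega>\<in>space M. X1 \<omega> = a} * prob {\<omega>\<in>space M. X2 \<omega> = b}"
      using indep3[OF ind, of 0 1 2 z a b] by simp
  qed
  have cY: "prob {\<omega>\<in>space M. Z \<omega> + Y1 \<omega> + Y2 \<omega> \<le> j} =
    (\<Sum>z\<le>j. prob {\<omega>\<in>space M. Z \<omega> = z} * (1 - T (1-(p1+p2)/2) (1-(p1+p2)/2) (j-z)))"
  proof (rule cdf3[OF Z assms(7,8)])
    show "0 < (p1+p2)/2" "(p1+p2)/2 \<le> 1" "0 < (p1+p2)/2" "(p1+p2)/2 \<le> 1" using pm by auto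
    fix z a b
    show "prob {\<omega>\<in>space M. Z \<omega> = z \<and> Y1 \<omega> = a \<and> Y2 \<omega> = b}
       = prob {\<omega>\<in>space M. Z \<omega> = z} * prob {\<omega>\<in>space M. Y1 \<omega> = a} * prob {\<omega>\<in>space M. Y2 \<omega> = b}"
      using indep3[OF ind, of 0 3 4 z a b] by simp
  qed
  have eqm: "1-(p1+p2)/2 = ((1-p1)+(1-p2))/2" by (simp add: field_simps)
  have le: "prob {\<omega>\<in>space M. Z \<omega> + X1 \<omega> + X2 \<omega> \<le> j} \<le>
            prob {\<omega>\<in>space M. Z \<omega> + Y1 \<omega> + Y2 \<omega> \<le> j}"
    unfolding cX cY eqm
    using T_main[of "1-p2" "1-p1"] assms(2-4)
    by (intro sum_mono mult_left_mono) auto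
  have cm: "{\<omega>\<in>space M. j < S \<omega>} = space M - {\<omega>\<in>space M. S \<omega> \<le> j}" for S :: "'a \<Rightarrow> nat"
    by auto
  have e1: "{\<omega>\<in>space M. Z \<omega> + X1 \<omega> + X2 \<omega> \<le> j} \<in> events"
    using Z X1 by (intro ev_nat) auto
  have e2: "{\<omega>\<in>space M. Z \<omega> + Y1 \<omega> + Y2 \<omega> \<le> j} \<in> events"
    using Z X1 by (intro ev_nat) auto
  show "measure M {\<omega> \<in> space M. Z \<omega> + X1 \<omega> + X2 \<omega> > j}
             \<ge> measure M {\<omega> \<in> space M. Z \<omega> + Y1 \<omega> + Y2 \<omega> > j}"
    using cm[of "\<lambda>\<omega>. Z \<omega> + X1 \<omega> + X2 \<omega>"] cm[of "\<lambda>\<omega>. Z \<omega> + Y1 \<omega> + Y2 \<omega>"]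
      prob_compl[OF e1] prob_compl[OF e2] le by simp
qed

end
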